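(* Let $n\ge 4$ be an integer, and let $I$ be chosen uniformly at random among the $2$-element subsets of $\{1,\ldots,n\}$. Then the probability that the sequence $(C_0(I),\ldots,C_{s(I)}(I))$ of Naruse-Newton coefficients of $I$ is unimodal is exactly $\frac{4}{n}$.
   Context: Partitions are drawn as Young diagrams $\mathbb{D}(\lambda)$ in English notation; $c_{i,j}$ is the cell in row $i$, column $j$. The hook length $h_\lambda(c)$ is the number of cells of $\mathbb{D}(\lambda)$ weakly right of $c$ in its row or weakly below $c$ in its column (counting $c$ once). For $\mu\subseteq\lambda$, an excited diagram of $\lambda/\mu$ is a subset of $\mathbb{D}(\lambda)$ obtained from $\mathbb{D}(\mu)$ by repeatedly replacing a cell $c_{i,j}\in D$ by $c_{i+1,j+1}$, allowed iff $c_{i+1,j+1}\in\mathbb{D}(\lambda)$ and none of $c_{i,j+1},c_{i+1,j},c_{i+1,j+1}$ lies in $D$; $\mathbb{E}(\lambda/\mu)$ is their set. A ribbon with $n$ cells is read from its lower-left to its upper-right cell, each successive cell directly right of or directly above the previous; it corresponds to the set of $i\in\{1,\ldots,n-1\}$ with cell $i$ directly below cell $i+1$. A descent set is a non-empty finite set $I$ of positive integers; $\lambda^I$ is the unique partition with $\lambda^I_1=\lambda^I_2$ such that the cells $c_{i,j}\in\mathbb{D}(\lambda^I)$ with fewer than three of $c_{i,j+1},c_{i+1,j},c_{i+1,j+1}$ in $\mathbb{D}(\lambda^I)$ form a ribbon corresponding to $I$; this ribbon is $\mathbb{D}(\lambda^I)\setminus\mathbb{D}(\mu^I)$ for a partition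 $\mu^I$. Let $s(I)=\lambda^I_1-1$. Naruse-Newton coefficients: every excited diagram of $\lambda^I/\mu^I$ meets row 1 in $\{c_{1,1},\ldots,c_{1,r}\}$, $0\le r\le s$; for $0\le j\le s(I)$, $C_j(I)=\sum_D\prod_{c\in D,\,c\notin\text{row }1}h_{\lambda^I}(c)$, summed over $D\in\mathbb{E}(\lambda^I/\mu^I)$ with exactly $s-j$ cells in row 1. A sequence $(x_k)_{k=0}^m$ is unimodal if there is an index $i$ with $0\le i\le m$ such that $x_0\le x_1\le\cdots\le x_i$ and $x_i\ge x_{i+1}\ge\cdots\ge x_m$. *)

theory Defs
  imports Complex_Main
begin

text \<open>Cells are pairs (row, column), both indexed from 1 (English notation).
  A partition is a list of positive, weakly decreasing parts.\<close>

type_synonym cell = "nat \<times> nat"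

definition is_partition :: "nat list \<Rightarrow> bool" where
  "is_partition lam \<longleftrightarrow> sorted_wrt (\<ge>) lam \<and> (\<forall>x \<in> set lam. 0 < x)"

definition diagram :: "nat list \<Rightarrow> cell set" where
  "diagram lam = {(i, j). 1 \<le> i \<and> i \<le> length lam \<and> 1 \<le> j \<and> j \<le> lam ! (i - 1)}"

definition hook :: "nat list \<Rightarrow> cell \<Rightarrow> nat" where
  "hook lam c = card {d \<in> diagram lam. fst d = fst c \<and> snd d \<ge> snd c}
              + card {d \<in> diagram lam. snd d = snd c \<and> fst d \<ge> fst c} - 1"

definition rim :: "nat list \<Rightarrow> cell set" where
  "rim lam = {(i, j) \<in> diagram lam.
      card ({(i, j + 1), (i + 1, j), (i + 1, j + 1)} \<inter> diagram lam) < 3}"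

text \<open>A set S of cells is a ribbon corresponding to the descent set I:
  it has m = Max I + 1 cells read from lower-left to upper-right, cell k+1 is directly
  above cell k iff k \<in> I and directly right of it otherwise.  Cell k (1 \<le> k \<le> m)
  sits (number of up-steps still to come) rows below the top row a and
  (k - 1 - number of up-steps already made) columns right of the start column b.\<close>
definition ribbon_of :: "nat set \<Rightarrow> cell set \<Rightarrow> bool" where
  "ribbon_of I S \<longleftrightarrow> (\<exists>m a b. I \<subseteq> {1..<m} \<and>
     S = (\<lambda>k. (a + card {i \<in> I. k \<le> i}, b + (k - 1) - card {i \<in> I. i < k})) ` {1..m})"

definition descent_set :: "nat set \<Rightarrow> bool" where
  "descent_set I \<longleftrightarrow> finite I \<and> I \<noteq> {} \<and> 0 \<notin> I"

definition lamI :: "nat set \<Rightarrow> nat list" where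
  "lamI I = (THE lam. is_partition lam \<and> 2 \<le> length lam \<and> lam ! 0 = lam ! 1
                      \<and> ribbon_of I (rim lam))"

definition muI :: "nat set \<Rightarrow> nat list" where
  "muI I = (THE mu. is_partition mu \<and> diagram mu \<subseteq> diagram (lamI I)
                    \<and> diagram (lamI I) - diagram mu = rim (lamI I))"

definition sI :: "nat set \<Rightarrow> nat" where
  "sI I = lamI I ! 0 - 1"

inductive excited :: "nat list \<Rightarrow> nat list \<Rightarrow> cell set \<Rightarrow> bool" for lam mu where
  base: "excited lam mu (diagram mu)"
| move: "\<lbrakk> excited lam mu D; (i, j) \<in> D; (i + 1, j + 1) \<in> diagram lam;
           (i, j + 1) \<notin> D; (i + 1, j) \<notin> D; (i + 1, j + 1) \<notin> D \<rbrakk>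
         \<Longrightarrow> excited lam mu (insert (i + 1, j + 1) (D - {(i, j)}))"

definition NN_coeff :: "nat set \<Rightarrow> nat \<Rightarrow> nat" where
  "NN_coeff I j = (\<Sum>D \<in> {D. excited (lamI I) (muI I) D
                             \<and> card {c \<in> D. fst c = 1} = sI I - j}.
                    \<Prod>c \<in> {c \<in> D. fst c \<noteq> 1}. hook (lamI I) c)"

definition unimodal :: "(nat \<Rightarrow> nat) \<Rightarrow> nat \<Rightarrow> bool" where
  "unimodal x m \<longleftrightarrow> (\<exists>i \<le> m. (\<forall>a b. a \<le> b \<and> b \<le> i \<longrightarrow> x a \<le> x b)
                          \<and> (\<forall>a b. i \<le> a \<and> a \<le> b \<and> b \<le> m \<longrightarrow> x b \<le> x a))"

end

theory Submission
  imports Defs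
begin


lemma card3_lt:
  assumes "x \<noteq> y" "x \<noteq> z" "y \<noteq> z"
  shows "card ({x,y,z} \<inter> D) < 3 \<longleftrightarrow> \<not> (x \<in> D \<and> y \<in> D \<and> z \<in> D)"
  using assms by (cases "x\<in>D"; cases "y\<in>D"; cases "z\<in>D"; auto simp: Int_insert_left card_insert_if)

lemma partition_mono: "is_partition lam \<Longrightarrow> i \<le> k \<Longrightarrow> k < length lam \<Longrightarrow> lam ! k \<le> lam ! i"
  unfolding is_partition_def by (metis sorted_wrt_iff_nth_less order_le_less)

lemma partition_pos: "is_partition lam \<Longrightarrow> k < length lam \<Longrightarrow> 0 < lam ! k"
  unfolding is_partition_def by auto

lemma mem_diagram: "(i,j) \<in> diagram lam \<longleftrightarrow> 1 \<le> i \<and> i \<le> length lam \<and> 1 \<le> j \<and> j \<le> lam ! (i-1)"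
  by (simp add: diagram_def)

lemma rim_partition:
  assumes "is_partition lam"
  shows "rim lam = {(i,j) \<in> diagram lam. (i+1,j+1) \<notin> diagram lam}"
proof -
  have "card ({(i, j + 1), (i + 1, j), (i + 1, j + 1)} \<inter> diagram lam) < 3 \<longleftrightarrow> (i+1,j+1) \<notin> diagram lam"
    if "(i,j) \<in> diagram lam" for i j
  proof -
    have "(i+1,j+1) \<in> diagram lam \<Longrightarrow> (i,j+1) \<in> diagram lam \<and> (i+1,j) \<in> diagram lam"
      using that partition_mono[OF assms, of "i-1" i] by (auto simp: mem_diagram)
    then show ?thesis by (subst card3_lt) auto
  qed
  then show ?thesis unfolding rim_def by auto
qed

lemma partition_inj:
  assumes p: "is_partition p" and q: "is_partition q" and d: "diagram p = diagram q"
  shows "p = q"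
proof -
  have rp: "(i,1) \<in> diagram p \<longleftrightarrow> 1 \<le> i \<and> i \<le> length p" for i
    using partition_pos[OF p, of "i-1"] by (auto simp: mem_diagram less_eq_Suc_le)
  have rq: "(i,1) \<in> diagram q \<longleftrightarrow> 1 \<le> i \<and> i \<le> length q" for i
    using partition_pos[OF q, of "i-1"] by (auto simp: mem_diagram less_eq_Suc_le)
  have e: "1 \<le> i \<and> i \<le> length p \<longleftrightarrow> 1 \<le> i \<and> i \<le> length q" for i
    using rp[of i] rq[of i] d by simp
  have len: "length p = length q"
  proof (rule ccontr)
    assume "length p \<noteq> length q"
    hence "length p < length q \<or> length q < length p" by linarith
    thus False using e[of "length q"] e[of "length p"] by auto
  qed
  show ?thesis
  proof (rule nth_equalityI[OF len])
    fix k assume k: "k < length p"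
    have "(k+1, j) \<in> diagram p \<longleftrightarrow> 1 \<le> j \<and> j \<le> p ! k" for j using k by (simp add: mem_diagram)
    moreover have "(k+1, j) \<in> diagram q \<longleftrightarrow> 1 \<le> j \<and> j \<le> q ! k" for j using k len by (simp add: mem_diagram)
    ultimately have "1 \<le> j \<and> j \<le> p ! k \<longleftrightarrow> 1 \<le> j \<and> j \<le> q ! k" for j using d by auto
    from this[of "p!k"] this[of "q!k"] partition_pos[OF p k] partition_pos[OF q] k len
    show "p ! k = q ! k" by fastforce
  qed
qed

lemma card_pair_filter:
  "a \<noteq> b \<Longrightarrow> card {i \<in> {a,b}. P i} = (if P a then 1 else 0) + (if P b then 1 else 0)"
proof -
  assume ab: "a \<noteq> b"
  have "{i \<in> {a,b}. P i} = (if P a then {a} else {}) \<union> (if P b then {b} else {})" by auto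
  then show ?thesis using ab by (cases "P a"; cases "P b") simp_all
qed



definition Rim0 :: "nat \<Rightarrow> nat \<Rightarrow> cell set" where
 "Rim0 a b = {(i,j). (i = 3 \<and> 1 \<le> j \<and> j \<le> a) \<or> (i = 2 \<and> a \<le> j \<and> j \<le> b - 1) \<or> (i = 1 \<and> j = b - 1)}"

lemma card_pair_filter':
  "a \<noteq> b \<Longrightarrow> card {i. (i = a \<or> i = b) \<and> P i} = (if P a then 1 else 0) + (if P b then 1 else 0)"
  using card_pair_filter[of a b P] by simp

lemma rc_simp:
  fixes a b k :: nat
  assumes "1 \<le> a" "a < b"
  shows "card {i. (i = a \<or> i = b) \<and> k \<le> i} = (if k \<le> a then 1 else 0) + (if k \<le> b then 1 else 0)"
    and "card {i. (i = a \<or> i = b) \<and> i < k} = (if a < k then 1 else 0) + (if b < k then 1 else 0)"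
proof -
  have ne: "a \<noteq> b" using assms by linarith
  show "card {i. (i = a \<or> i = b) \<and> k \<le> i} = (if k \<le> a then 1 else 0) + (if k \<le> b then 1 else 0)"
    by (rule card_pair_filter'[OF ne, of "\<lambda>i. k \<le> i"])
  show "card {i. (i = a \<or> i = b) \<and> i < k} = (if a < k then 1 else 0) + (if b < k then 1 else 0)"
    by (rule card_pair_filter'[OF ne, of "\<lambda>i. i < k"])
qed

lemma ribbon_Rim0:
  assumes ab: "1 \<le> a" "a < b"
  shows "(\<lambda>k. (1 + card {i \<in> {a,b}. k \<le> i}, 1 + (k - 1) - card {i \<in> {a,b}. i < k})) ` {1..b+1} = Rim0 a b"
    (is "?f ` _ = _")
proof
  show "?f ` {1..b+1} \<subseteq> Rim0 a b"
  proof
    fix c assume "c \<in> ?f ` {1..b+1}"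
    then obtain k where k: "k \<in> {1..b+1}" "c = ?f k" by blast
    consider "k \<le> a" | "a < k" "k \<le> b" | "k = b + 1" using k by fastforce
    then show "c \<in> Rim0 a b"
      by cases (use k ab in \<open>auto simp: rc_simp Rim0_def\<close>)
  qed
  show "Rim0 a b \<subseteq> ?f ` {1..b+1}"
  proof
    fix c assume c: "c \<in> Rim0 a b"
    obtain i j where ij: "c = (i,j)" by fastforce
    consider "i = 3" "1 \<le> j" "j \<le> a" | "i = 2" "a \<le> j" "j \<le> b - 1" | "i = 1" "j = b - 1"
      using c ij by (auto simp: Rim0_def)
    then show "c \<in> ?f ` {1..b+1}"
    proof cases
      case 1 then show ?thesis using ab ij by (intro image_eqI[of _ _ j]) (auto simp: rc_simp)
    next
      case 2 then show ?thesis using ab ij by (intro image_eqI[of _ _ "j+1"]) (auto simp: rc_simp)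
    next
      case 3 then show ?thesis using ab ij by (intro image_eqI[of _ _ "b+1"]) (auto simp: rc_simp)
    qed
  qed
qed

lemma diag3: "(i,j) \<in> diagram [L,L,a] \<longleftrightarrow> 1 \<le> j \<and> ((i=1 \<or> i=2) \<and> j \<le> L \<or> i = 3 \<and> j \<le> a)"
proof -
  have "i \<in> {1..3} \<longleftrightarrow> i = 1 \<or> i = 2 \<or> i = 3" by auto
  then show ?thesis by (auto simp: mem_diagram)
qed

lemma part3: "1 \<le> a \<Longrightarrow> a \<le> L \<Longrightarrow> is_partition [L,L,a]"
  by (simp add: is_partition_def)

lemma rim3:
  assumes "1 \<le> a" "a < b"
  shows "rim [b-1,b-1,a] = Rim0 a b"
proof -
  have p: "is_partition [b-1,b-1,a]" by (rule part3) (use assms in auto)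
  show ?thesis using assms unfolding rim_partition[OF p] by (auto simp: diag3 Rim0_def)
qed



lemma rim_sub: "rim lam \<subseteq> diagram lam" by (auto simp: rim_def)

lemma rim_last:
  assumes p: "is_partition lam" and i: "1 \<le> i" "i \<le> length lam"
  shows "(i, lam!(i-1)) \<in> rim lam"
proof -
  have pos: "0 < lam!(i-1)" using partition_pos[OF p, of "i-1"] i by simp
  have "i < length lam \<Longrightarrow> lam!i \<le> lam!(i-1)" using partition_mono[OF p, of "i-1" i] by simp
  then show ?thesis using pos i unfolding rim_partition[OF p] by (auto simp: mem_diagram)
qed

lemma rim_corner:
  assumes p: "is_partition lam" and ne: "lam \<noteq> []"
  shows "(length lam, 1) \<in> rim lam"
proof -
  have pos: "0 < lam!(length lam-1)" using partition_pos[OF p, of "length lam-1"] ne by simp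
  then show ?thesis using ne unfolding rim_partition[OF p] by (auto simp: mem_diagram Suc_le_eq)
qed

lemma rim_row1:
  assumes p: "is_partition lam" and l: "2 \<le> length lam" and c: "(1,j) \<in> rim lam"
  shows "lam!1 \<le> j"
proof (rule ccontr)
  assume "\<not> lam!1 \<le> j"
  then have "(2, j+1) \<in> diagram lam" using c l unfolding rim_partition[OF p] by (auto simp: mem_diagram)
  then show False using c unfolding rim_partition[OF p] by (auto simp: numeral_2_eq_2)
qed

lemma lamI_eq:
  fixes a b :: nat
  assumes ab: "1 \<le> a" "a < b"
  shows "lamI {a,b} = [b-1,b-1,a]"
  unfolding lamI_def
proof (rule the_equality)
  have p3: "is_partition [b-1,b-1,a]" by (rule part3) (use ab in auto)
  have "ribbon_of {a,b} (rim [b-1,b-1,a])"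
    unfolding ribbon_of_def
    by (rule exI[of _ "b+1"], rule exI[of _ 1], rule exI[of _ 1])
       (use ab rim3[OF ab] ribbon_Rim0[OF ab] in auto)
  then show "is_partition [b-1,b-1,a] \<and> 2 \<le> length [b-1,b-1,a] \<and> [b-1,b-1,a]!0 = [b-1,b-1,a]!1
     \<and> ribbon_of {a,b} (rim [b-1,b-1,a])" using p3 by simp
next
  fix lam assume H: "is_partition lam \<and> 2 \<le> length lam \<and> lam!0 = lam!1 \<and> ribbon_of {a,b} (rim lam)"
  then have p: "is_partition lam" and l2: "2 \<le> length lam" and e01: "lam!0 = lam!1"
    and r: "ribbon_of {a,b} (rim lam)" by auto
  from r obtain m a0 b0 where Im: "{a,b} \<subseteq> {1..<m}" and
    R: "rim lam = (\<lambda>k. (a0 + card {i \<in> {a,b}. k \<le> i}, b0 + (k - 1) - card {i \<in> {a,b}. i < k})) ` {1..m}"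
    unfolding ribbon_of_def by blast
  have ne: "a \<noteq> b" using ab by simp
  define g where "g = (\<lambda>k. (a0 + card {i \<in> {a,b}. k \<le> i}, b0 + (k - 1) - card {i \<in> {a,b}. i < k}))"
  have R': "rim lam = g ` {1..m}" using R g_def by simp
  have gk: "g k = (a0 + ((if k \<le> a then 1 else 0) + (if k \<le> b then 1 else 0)),
                   b0 + (k - 1) - ((if a < k then 1 else 0) + (if b < k then 1 else 0)))" for k
    unfolding g_def card_pair_filter[OF ne] by (rule refl)
  have bm: "b < m" using Im by auto
  have gdiag: "k \<in> {1..m} \<Longrightarrow> g k \<in> diagram lam" for k using R' rim_sub by blast
  have "g m \<in> diagram lam" using gdiag bm by simp
  moreover have "g m = (a0, b0 + (m-1) - 2)" using gk bm ab by simp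
  ultimately have a0ge: "1 \<le> a0" by (simp add: mem_diagram)
  have "(1, lam!0) \<in> rim lam" using rim_last[OF p, of 1] l2 by simp
  then obtain k where "k \<in> {1..m}" "g k = (1, lam!0)" using R' by auto
  then have a0le: "a0 \<le> 1" using gk[of k] by simp
  have a0: "a0 = 1" using a0ge a0le by simp
  have "g 1 \<in> diagram lam" using gdiag bm by simp
  moreover have "g 1 = (a0 + 2, b0)" using gk ab by simp
  ultimately have b0ge: "1 \<le> b0" by (simp add: mem_diagram)
  have "(length lam, 1) \<in> rim lam" using rim_corner[OF p] l2 by (metis One_nat_def list.size(3) not_numeral_le_zero)
  then obtain k where k: "k \<in> {1..m}" "g k = (length lam, 1)" using R' by auto
  then have "b0 + (k - 1) - ((if a < k then 1 else 0) + (if b < k then 1 else 0)) = 1" using gk[of k] by simp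
  then have b0le: "b0 \<le> 1" using k ab by (auto split: if_splits)
  have b0: "b0 = 1" using b0ge b0le by simp
  have "g (b+1) \<in> rim lam" using R' bm by auto
  moreover have "g (b+1) = (1, b - 1)" using gk a0 b0 ab by simp
  ultimately have "lam!1 \<le> b - 1" using rim_row1[OF p l2] by simp
  moreover have "g m = (1, m - 2)" using gk bm ab a0 b0 by simp
  then have "(1, m-2) \<in> diagram lam" using gdiag[of m] bm by simp
  then have "m - 2 \<le> lam!0" by (simp add: mem_diagram)
  ultimately have m: "m = b + 1" using e01 bm ab by linarith
  have RR: "rim lam = Rim0 a b" using R unfolding a0 b0 m ribbon_Rim0[OF ab] by assumption
  have Rd: "Rim0 a b \<subseteq> diagram lam" using RR rim_sub by blast
  have "(3,1) \<in> diagram lam" using Rd ab by (auto simp: Rim0_def)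
  then have l3a: "3 \<le> length lam" by (simp add: mem_diagram)
  have "(length lam, lam!(length lam - 1)) \<in> Rim0 a b" using rim_last[OF p, of "length lam"] l2 RR by simp
  then have l3b: "length lam \<le> 3" by (auto simp: Rim0_def)
  have len: "length lam = 3" using l3a l3b by simp
  have "(3, lam!2) \<in> Rim0 a b" using rim_last[OF p, of 3] len RR by simp
  then have x2a: "lam!2 \<le> a" by (simp add: Rim0_def)
  have "(3, a) \<in> diagram lam" using Rd ab by (auto simp: Rim0_def)
  then have x2b: "a \<le> lam!2" by (simp add: mem_diagram)
  have "(2, lam!1) \<in> Rim0 a b" using rim_last[OF p, of 2] len RR by simp
  then have x1a: "lam!1 \<le> b - 1" by (simp add: Rim0_def)
  have "(2, b-1) \<in> Rim0 a b" using ab by (simp add: Rim0_def)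
  then have "(2, b-1) \<in> diagram lam" using Rd by blast
  then have x1b: "b - 1 \<le> lam!1" by (simp add: mem_diagram)
  show "lam = [b-1,b-1,a]"
  proof (rule nth_equalityI)
    show "length lam = length [b-1,b-1,a]" using len by simp
    fix k assume "k < length lam"
    then have "k = 0 \<or> k = 1 \<or> k = 2" using len by auto
    then show "lam ! k = [b-1,b-1,a] ! k" using x2a x2b x1a x1b e01 by auto
  qed
qed



definition M0 :: "nat \<Rightarrow> nat \<Rightarrow> cell set" where
  "M0 L a = {(i,j). (i = 1 \<and> 1 \<le> j \<and> j \<le> L - 1) \<or> (i = 2 \<and> 1 \<le> j \<and> j \<le> a - 1)}"

definition E :: "nat \<Rightarrow> nat \<Rightarrow> nat \<Rightarrow> nat \<Rightarrow> cell set" where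
  "E L a r q = {(i,j). (i = 1 \<and> 1 \<le> j \<and> j \<le> r) \<or> (i = 2 \<and> r + 2 \<le> j \<and> j \<le> L)
      \<or> (i = 2 \<and> 1 \<le> j \<and> j \<le> q) \<or> (i = 3 \<and> q + 2 \<le> j \<and> j \<le> a)}"

lemma mem_E: "(i,j) \<in> E L a r q \<longleftrightarrow> (i = 1 \<and> 1 \<le> j \<and> j \<le> r) \<or> (i = 2 \<and> r + 2 \<le> j \<and> j \<le> L)
      \<or> (i = 2 \<and> 1 \<le> j \<and> j \<le> q) \<or> (i = 3 \<and> q + 2 \<le> j \<and> j \<le> a)"
  by (simp add: E_def)

lemma mem_M0: "(i,j) \<in> M0 L a \<longleftrightarrow> (i = 1 \<and> 1 \<le> j \<and> j \<le> L - 1) \<or> (i = 2 \<and> 1 \<le> j \<and> j \<le> a - 1)"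
  by (simp add: M0_def)

lemma mem_Rim0: "(i,j) \<in> Rim0 a b \<longleftrightarrow> (i = 3 \<and> 1 \<le> j \<and> j \<le> a) \<or> (i = 2 \<and> a \<le> j \<and> j \<le> b - 1) \<or> (i = 1 \<and> j = b - 1)"
  by (simp add: Rim0_def)

lemma diag_minus_rim:
  assumes "1 \<le> a" "a < b"
  shows "diagram [b-1,b-1,a] - Rim0 a b = M0 (b-1) a"
proof (rule set_eqI)
  fix c :: cell
  obtain i j where c: "c = (i,j)" by fastforce
  show "c \<in> diagram [b-1,b-1,a] - Rim0 a b \<longleftrightarrow> c \<in> M0 (b-1) a"
    unfolding c using assms by (simp add: diag3 mem_Rim0 mem_M0) linarith
qed

lemma E_base: "1 \<le> a \<Longrightarrow> a \<le> L \<Longrightarrow> E L a (L-1) (a-1) = M0 L a"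
  by (rule set_eqI) (auto simp: mem_E M0_def)

lemma mu_wit:
  fixes a b :: nat
  assumes ab: "1 \<le> a" "a < b"
  shows "\<exists>w. is_partition w \<and> diagram w = M0 (b-1) a"
proof -
  consider "a = 1" "b = 2" | "a = 1" "b > 2" | "a > 1" using ab by linarith
  then show ?thesis
  proof cases
    case 1 then show ?thesis
      by (intro exI[of _ "[]"]) (auto simp: is_partition_def diagram_def M0_def)
  next
    case 2
    have "diagram [b-2] = M0 (b-1) a"
    proof (rule set_eqI)
      fix c :: cell
      obtain i j where c: "c = (i,j)" by fastforce
      show "c \<in> diagram [b-2] \<longleftrightarrow> c \<in> M0 (b-1) a" unfolding c using 2 by (auto simp: mem_diagram mem_M0)
    qed
    then show ?thesis using 2 by (intro exI[of _ "[b-2]"]) (auto simp: is_partition_def)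
  next
    case 3
    have "diagram [b-2, a-1] = M0 (b-1) a"
    proof (rule set_eqI)
      fix c :: cell
      obtain i j where c: "c = (i,j)" by fastforce
      have "i \<in> {1..2} \<longleftrightarrow> i = 1 \<or> i = 2" by auto
      then show "c \<in> diagram [b-2, a-1] \<longleftrightarrow> c \<in> M0 (b-1) a" unfolding c using 3 ab
        by (auto simp: mem_diagram mem_M0)
    qed
    then show ?thesis using 3 ab by (intro exI[of _ "[b-2, a-1]"]) (auto simp: is_partition_def)
  qed
qed

lemma muI_diag:
  fixes a b :: nat
  assumes ab: "1 \<le> a" "a < b"
  shows "diagram (muI {a,b}) = M0 (b-1) a"
proof -
  obtain w where w: "is_partition w" "diagram w = M0 (b-1) a" using mu_wit[OF ab] by blast
  have key: "diagram [b-1,b-1,a] - rim [b-1,b-1,a] = M0 (b-1) a"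
    using diag_minus_rim[OF ab] rim3[OF ab] by simp
  have sub: "M0 (b-1) a \<subseteq> diagram [b-1,b-1,a]" using key by blast
  have "muI {a,b} = w"
    unfolding muI_def lamI_eq[OF ab]
  proof (rule the_equality)
    show "is_partition w \<and> diagram w \<subseteq> diagram [b-1,b-1,a] \<and> diagram [b-1,b-1,a] - diagram w = rim [b-1,b-1,a]"
      using w sub key rim_sub[of "[b-1,b-1,a]"] by blast
    fix mu assume H: "is_partition mu \<and> diagram mu \<subseteq> diagram [b-1,b-1,a] \<and> diagram [b-1,b-1,a] - diagram mu = rim [b-1,b-1,a]"
    then have "diagram mu = diagram [b-1,b-1,a] - rim [b-1,b-1,a]" by blast
    then have "diagram mu = diagram w" using key w by simp
    then show "mu = w" using partition_inj H w by blast
  qed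
  then show ?thesis using w by simp
qed

lemma sI_eq: "1 \<le> a \<Longrightarrow> a < b \<Longrightarrow> sI {a,b} = b - 2"
  by (simp add: sI_def lamI_eq)



lemma E_step_r:
  assumes "q < Suc r" "Suc r + 1 \<le> L"
  shows "insert (2, Suc r + 1) (E L a (Suc r) q - {(1, Suc r)}) = E L a r q"
proof (rule set_eqI)
  fix c :: cell
  obtain i j where c: "c = (i,j)" by fastforce
  have "(i,j) \<in> insert (2, Suc r + 1) (E L a (Suc r) q - {(1, Suc r)}) \<longleftrightarrow>
        (i = 2 \<and> j = r + 2) \<or> ((i,j) \<in> E L a (Suc r) q \<and> \<not> (i = 1 \<and> j = Suc r))" by auto
  also have "\<dots> \<longleftrightarrow> (i,j) \<in> E L a r q"
    unfolding mem_E using assms by linarith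
  finally show "c \<in> insert (2, Suc r + 1) (E L a (Suc r) q - {(1, Suc r)}) \<longleftrightarrow> c \<in> E L a r q"
    unfolding c .
qed

lemma E_step_q:
  assumes "Suc q \<le> r" "Suc q + 1 \<le> a"
  shows "insert (3, Suc q + 1) (E L a r (Suc q) - {(2, Suc q)}) = E L a r q"
proof (rule set_eqI)
  fix c :: cell
  obtain i j where c: "c = (i,j)" by fastforce
  have "(i,j) \<in> insert (3, Suc q + 1) (E L a r (Suc q) - {(2, Suc q)}) \<longleftrightarrow>
        (i = 3 \<and> j = q + 2) \<or> ((i,j) \<in> E L a r (Suc q) \<and> \<not> (i = 2 \<and> j = Suc q))" by auto
  also have "\<dots> \<longleftrightarrow> (i,j) \<in> E L a r q"
    unfolding mem_E using assms by (cases "i = 2"; cases "i = 3"; simp; linarith?)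
  finally show "c \<in> insert (3, Suc q + 1) (E L a r (Suc q) - {(2, Suc q)}) \<longleftrightarrow> c \<in> E L a r q"
    unfolding c .
qed

lemma excited_E_only:
  assumes "excited lam mu D" "lam = [L,L,a]" "diagram mu = M0 L a" "1 \<le> a" "a \<le> L"
  shows "\<exists>r q. r \<le> L - 1 \<and> q \<le> r \<and> q \<le> a - 1 \<and> D = E L a r q"
  using assms(1)
proof induction
  case base
  have e: "diagram mu = E L a (L-1) (a-1)" using assms(3-5) E_base[of a L] by simp
  have "L - 1 \<le> L - 1 \<and> a - 1 \<le> L - 1 \<and> a - 1 \<le> a - 1" using assms(5) by simp
  then show ?case using e by blast
next
  case (move D i j)
  from move.IH obtain r q where rq: "r \<le> L - 1" "q \<le> r" "q \<le> a - 1" and D: "D = E L a r q" by blast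
  have ij: "(i,j) \<in> E L a r q" using move.hyps D by simp
  have d: "(i+1, j+1) \<in> diagram [L,L,a]" using move.hyps assms(2) by simp
  have n1: "(i, j+1) \<notin> E L a r q" and n2: "(i+1, j) \<notin> E L a r q" and n3: "(i+1,j+1) \<notin> E L a r q"
    using move.hyps D by simp_all
  consider "i = 1" "1 \<le> j" "j \<le> r" | "i = 2" "r + 2 \<le> j" "j \<le> L" | "i = 2" "1 \<le> j" "j \<le> q"
    | "i = 3" "q + 2 \<le> j" "j \<le> a" using ij unfolding mem_E by blast
  then show ?case
  proof cases
    case 1
    have jr: "j = r" using n1 1 by (simp add: mem_E)
    have qr: "q < r" using n2 1 jr by (simp add: mem_E)
    have rL: "r + 1 \<le> L" using d 1 jr by (simp add: diag3)
    obtain r' where r': "r = Suc r'" using 1 jr by (cases r) auto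
    have e1: "(i+1, j+1) = (2::nat, Suc r' + 1)" using 1 jr r' by simp
    have e2: "(i, j) = (1::nat, Suc r')" using 1 jr r' by simp
    have "insert (i + 1, j + 1) (D - {(i, j)}) = E L a r' q"
      unfolding e1 e2 D r' by (rule E_step_r) (use qr r' rL in simp_all)
    moreover have "r' \<le> L - 1 \<and> q \<le> r' \<and> q \<le> a - 1" using rq qr r' by simp
    ultimately show ?thesis by blast
  next
    case 2
    have "j + 1 \<le> a" using d 2 by (simp add: diag3)
    then have "(i+1, j) \<in> E L a r q" using 2 rq by (simp add: mem_E)
    then show ?thesis using n2 by simp
  next
    case 3
    have jq: "j = q" using n1 3 rq by (simp add: mem_E)
    have qa: "q + 1 \<le> a" using d 3 jq by (simp add: diag3)
    obtain q' where q': "q = Suc q'" using 3 jq by (cases q) auto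
    have e1: "(i+1, j+1) = (3::nat, Suc q' + 1)" using 3 jq q' by simp
    have e2: "(i, j) = (2::nat, Suc q')" using 3 jq q' by simp
    have "insert (i + 1, j + 1) (D - {(i, j)}) = E L a r q'"
      unfolding e1 e2 D q' by (rule E_step_q) (use rq q' qa in simp_all)
    moreover have "r \<le> L - 1 \<and> q' \<le> r \<and> q' \<le> a - 1" using rq q' by simp
    ultimately show ?thesis by blast
  next
    case 4
    then show ?thesis using d by (simp add: diag3)
  qed
qed

lemma excited_move':
  assumes "excited lam mu D" "(i, j) \<in> D" "(i + 1, j + 1) \<in> diagram lam"
     "(i, j + 1) \<notin> D" "(i + 1, j) \<notin> D" "(i + 1, j + 1) \<notin> D"
     "D' = insert (i + 1, j + 1) (D - {(i, j)})"
  shows "excited lam mu D'"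
  using excited.move[OF assms(1-6)] assms(7) by simp

lemma excited_E_all:
  assumes lm: "lam = [L,L,a]" "diagram mu = M0 L a" "1 \<le> a" "a \<le> L"
  assumes rq: "r \<le> L - 1" "q \<le> r" "q \<le> a - 1"
  shows "excited lam mu (E L a r q)"
proof -
  have stq: "excited lam mu (E L a r' q')" if t: "excited lam mu (E L a r' (Suc q'))" "Suc q' \<le> r'" "Suc q' \<le> a - 1" for r' q'
  proof (rule excited_move'[OF t(1), of 2 "Suc q'"])
    show "(2, Suc q') \<in> E L a r' (Suc q')" by (simp add: mem_E)
    show "(2 + 1, Suc q' + 1) \<in> diagram lam" using t lm by (simp add: diag3)
    show "(2, Suc q' + 1) \<notin> E L a r' (Suc q')" using t by (simp add: mem_E)
    show "(2 + 1, Suc q') \<notin> E L a r' (Suc q')" using t by (simp add: mem_E)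
    show "(2 + 1, Suc q' + 1) \<notin> E L a r' (Suc q')" using t by (simp add: mem_E)
    have "insert (3, Suc q' + 1) (E L a r' (Suc q') - {(2, Suc q')}) = E L a r' q'"
      by (rule E_step_q) (use t in simp_all)
    moreover have "(2::nat) + 1 = 3" by simp
    ultimately show "E L a r' q' = insert (2 + 1, Suc q' + 1) (E L a r' (Suc q') - {(2, Suc q')})"
      by simp
  qed
  have str: "excited lam mu (E L a r' q')" if t: "excited lam mu (E L a (Suc r') q')" "q' \<le> r'" "Suc r' \<le> L - 1" for r' q'
  proof (rule excited_move'[OF t(1), of 1 "Suc r'"])
    show "(1, Suc r') \<in> E L a (Suc r') q'" by (simp add: mem_E)
    show "(1 + 1, Suc r' + 1) \<in> diagram lam" using t lm by (simp add: diag3)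
    show "(1, Suc r' + 1) \<notin> E L a (Suc r') q'" using t by (simp add: mem_E)
    show "(1 + 1, Suc r') \<notin> E L a (Suc r') q'" using t by (simp add: mem_E)
    show "(1 + 1, Suc r' + 1) \<notin> E L a (Suc r') q'" using t by (simp add: mem_E)
    have "insert (2, Suc r' + 1) (E L a (Suc r') q' - {(1, Suc r')}) = E L a r' q'"
      by (rule E_step_r) (use t in simp_all)
    then show "E L a r' q' = insert (1 + 1, Suc r' + 1) (E L a (Suc r') q' - {(1, Suc r')})"
      unfolding one_add_one by (rule sym)
  qed
  have b: "excited lam mu (E L a (L-1) (a-1))" using excited.base[of lam mu] lm E_base[of a L] by simp
  have A: "excited lam mu (E L a (L-1) (a-1-k))" if "k \<le> a - 1" for k
    using that
  proof (induction k)
    case 0 then show ?case using b by simp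
  next
    case (Suc k)
    then have "excited lam mu (E L a (L-1) (a-1-k))" by simp
    moreover have "a - 1 - k = Suc (a - 1 - Suc k)" using Suc.prems by simp
    ultimately show ?case using stq[of "L-1" "a-1-Suc k"] Suc.prems lm by simp
  qed
  have B: "excited lam mu (E L a (L-1-k) q)" if "k \<le> L - 1 - q" for k
    using that
  proof (induction k)
    case 0
    have "a - 1 - (a - 1 - q) = q" using rq by simp
    then show ?case using A[of "a-1-q"] rq by simp
  next
    case (Suc k)
    then have "excited lam mu (E L a (L-1-k) q)" by simp
    moreover have "L - 1 - k = Suc (L - 1 - Suc k)" using Suc.prems by simp
    ultimately show ?case using str[of "L-1-Suc k" q] Suc.prems lm by simp
  qed
  have e: "L - 1 - (L - 1 - r) = r" using rq by simp
  have "L - 1 - r \<le> L - 1 - q" using rq by simp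
  then have "excited lam mu (E L a (L-1-(L-1-r)) q)" by (rule B)
  then show ?thesis unfolding e .
qed



definition h2 :: "nat \<Rightarrow> nat \<Rightarrow> nat \<Rightarrow> nat" where
  "h2 L a j = L - j + 1 + (if j \<le> a then 1 else 0)"
definition h3 :: "nat \<Rightarrow> nat \<Rightarrow> nat" where
  "h3 a j = a - j + 1"
definition Ap :: "nat \<Rightarrow> nat \<Rightarrow> nat \<Rightarrow> nat" where
  "Ap L a r = (\<Prod>j\<in>{r+2..L}. h2 L a j)"
definition Tq :: "nat \<Rightarrow> nat \<Rightarrow> nat \<Rightarrow> nat" where
  "Tq L a q = (\<Prod>j\<in>{1..q}. h2 L a j) * (\<Prod>j\<in>{q+2..a}. h3 a j)"
definition Ss :: "nat \<Rightarrow> nat \<Rightarrow> nat \<Rightarrow> nat" where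
  "Ss L a r = (\<Sum>q\<in>{0..min r (a-1)}. Tq L a q)"

lemma hook2:
  assumes "1 \<le> j" "j \<le> L" 
  shows "hook [L,L,a] (2,j) = h2 L a j"
proof -
  have s1: "{d \<in> diagram [L,L,a]. fst d = fst (2::nat,j) \<and> snd d \<ge> snd (2::nat,j)} = (\<lambda>k. (2,k)) ` {j..L}"
  proof (rule set_eqI)
    fix d :: cell obtain x y where d: "d = (x,y)" by fastforce
    show "d \<in> {d \<in> diagram [L,L,a]. fst d = fst (2::nat,j) \<and> snd d \<ge> snd (2::nat,j)} \<longleftrightarrow> d \<in> (\<lambda>k. (2,k)) ` {j..L}"
      unfolding d using assms by (auto simp: diag3)
  qed
  have c1: "card ((\<lambda>k. (2::nat,k)) ` {j..L}) = L - j + 1"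
    using assms by (subst card_image) (auto simp: inj_on_def Suc_diff_le)
  have s2: "{d \<in> diagram [L,L,a]. snd d = snd (2::nat,j) \<and> fst d \<ge> fst (2::nat,j)} = (if j \<le> a then {(2,j),(3,j)} else {(2,j)})"
  proof (rule set_eqI)
    fix d :: cell obtain x y where d: "d = (x,y)" by fastforce
    show "d \<in> {d \<in> diagram [L,L,a]. snd d = snd (2::nat,j) \<and> fst d \<ge> fst (2::nat,j)} \<longleftrightarrow> d \<in> (if j \<le> a then {(2,j),(3,j)} else {(2,j)})"
      unfolding d using assms by (auto simp: diag3)
  qed
  show ?thesis unfolding hook_def s1 c1 s2 h2_def by simp
qed

lemma hook3:
  assumes "1 \<le> j" "j \<le> a" 
  shows "hook [L,L,a] (3,j) = h3 a j"
proof -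
  have s1: "{d \<in> diagram [L,L,a]. fst d = fst (3::nat,j) \<and> snd d \<ge> snd (3::nat,j)} = (\<lambda>k. (3,k)) ` {j..a}"
  proof (rule set_eqI)
    fix d :: cell obtain x y where d: "d = (x,y)" by fastforce
    show "d \<in> {d \<in> diagram [L,L,a]. fst d = fst (3::nat,j) \<and> snd d \<ge> snd (3::nat,j)} \<longleftrightarrow> d \<in> (\<lambda>k. (3,k)) ` {j..a}"
      unfolding d using assms by (auto simp: diag3)
  qed
  have c1: "card ((\<lambda>k. (3::nat,k)) ` {j..a}) = a - j + 1"
    using assms by (subst card_image) (auto simp: inj_on_def Suc_diff_le)
  have s2: "{d \<in> diagram [L,L,a]. snd d = snd (3::nat,j) \<and> fst d \<ge> fst (3::nat,j)} = {(3,j)}"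
  proof (rule set_eqI)
    fix d :: cell obtain x y where d: "d = (x,y)" by fastforce
    show "d \<in> {d \<in> diagram [L,L,a]. snd d = snd (3::nat,j) \<and> fst d \<ge> fst (3::nat,j)} \<longleftrightarrow> d \<in> {(3,j)}"
      unfolding d using assms by (auto simp: diag3)
  qed
  show ?thesis unfolding hook_def s1 c1 s2 h3_def by simp
qed



lemma row1_card: "card {c \<in> E L a r q. fst c = 1} = r"
proof -
  have "{c \<in> E L a r q. fst c = 1} = (\<lambda>k. (1::nat,k)) ` {1..r}"
  proof (rule set_eqI)
    fix d :: cell obtain x y where d: "d = (x,y)" by fastforce
    show "d \<in> {c \<in> E L a r q. fst c = 1} \<longleftrightarrow> d \<in> (\<lambda>k. (1::nat,k)) ` {1..r}"
      unfolding d by (auto simp: mem_E)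
  qed
  moreover have "card ((\<lambda>k. (1::nat,k)) ` {1..r}) = r"
    by (subst card_image) (auto simp: inj_on_def)
  ultimately show ?thesis by simp
qed

lemma nonrow1:
  "{c \<in> E L a r q. fst c \<noteq> 1} = ((\<lambda>k. (2::nat,k)) ` {r+2..L} \<union> (\<lambda>k. (2::nat,k)) ` {1..q}) \<union> (\<lambda>k. (3::nat,k)) ` {q+2..a}"
proof (rule set_eqI)
  fix d :: cell obtain x y where d: "d = (x,y)" by fastforce
  show "d \<in> {c \<in> E L a r q. fst c \<noteq> 1} \<longleftrightarrow> d \<in> ((\<lambda>k. (2::nat,k)) ` {r+2..L} \<union> (\<lambda>k. (2::nat,k)) ` {1..q}) \<union> (\<lambda>k. (3::nat,k)) ` {q+2..a}"
    unfolding d by (auto simp: mem_E)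
qed

lemma prod_E:
  assumes "1 \<le> a" "a \<le> L" "q \<le> r" "q \<le> a - 1" "r \<le> L - 1"
  shows "(\<Prod>c\<in>{c \<in> E L a r q. fst c \<noteq> 1}. hook [L,L,a] c) = Ap L a r * Tq L a q"
proof -
  let ?A1 = "(\<lambda>k. (2::nat,k)) ` {r+2..L}" and ?A2 = "(\<lambda>k. (2::nat,k)) ` {1..q}"
    and ?A3 = "(\<lambda>k. (3::nat,k)) ` {q+2..a}"
  have d12: "?A1 \<inter> ?A2 = {}" using assms by auto
  have d3: "(?A1 \<union> ?A2) \<inter> ?A3 = {}" by auto
  have "(\<Prod>c\<in>(?A1 \<union> ?A2) \<union> ?A3. hook [L,L,a] c) = (\<Prod>c\<in>?A1 \<union> ?A2. hook [L,L,a] c) * (\<Prod>c\<in>?A3. hook [L,L,a] c)"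
    by (rule prod.union_disjoint) (use d3 in auto)
  also have "(\<Prod>c\<in>?A1 \<union> ?A2. hook [L,L,a] c) = (\<Prod>c\<in>?A1. hook [L,L,a] c) * (\<Prod>c\<in>?A2. hook [L,L,a] c)"
    by (rule prod.union_disjoint) (use d12 in auto)
  also have "(\<Prod>c\<in>?A1. hook [L,L,a] c) = (\<Prod>k\<in>{r+2..L}. hook [L,L,a] (2,k))"
    by (subst prod.reindex) (auto simp: inj_on_def)
  also have "\<dots> = Ap L a r" unfolding Ap_def by (rule prod.cong) (auto intro: hook2)
  also have "(\<Prod>c\<in>?A2. hook [L,L,a] c) = (\<Prod>k\<in>{1..q}. hook [L,L,a] (2,k))"
    by (subst prod.reindex) (auto simp: inj_on_def)
  also have "\<dots> = (\<Prod>k\<in>{1..q}. h2 L a k)" by (rule prod.cong) (use assms in \<open>auto intro: hook2\<close>)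
  also have "(\<Prod>c\<in>?A3. hook [L,L,a] c) = (\<Prod>k\<in>{q+2..a}. hook [L,L,a] (3,k))"
    by (subst prod.reindex) (auto simp: inj_on_def)
  also have "\<dots> = (\<Prod>k\<in>{q+2..a}. h3 a k)" by (rule prod.cong) (auto intro: hook3)
  finally show ?thesis unfolding nonrow1 Tq_def by (simp add: mult.assoc)
qed

lemma E_inj:
  assumes "q1 \<le> r" "q2 \<le> r" "E L a r q1 = E L a r q2"
  shows "q1 = q2"
proof (rule ccontr)
  assume "q1 \<noteq> q2"
  then consider "q1 < q2" | "q2 < q1" by linarith
  then show False
  proof cases
    case 1
    have "(2, q2) \<in> E L a r q2" using 1 by (simp add: mem_E)
    moreover have "(2, q2) \<notin> E L a r q1" using 1 assms(1,2) by (simp add: mem_E)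
    ultimately show False using assms by simp
  next
    case 2
    have "(2, q1) \<in> E L a r q1" using 2 by (simp add: mem_E)
    moreover have "(2, q1) \<notin> E L a r q2" using 2 assms(1,2) by (simp add: mem_E)
    ultimately show False using assms by simp
  qed
qed

lemma NN_formula:
  fixes a b j :: nat
  assumes ab: "1 \<le> a" "a < b" and j: "j \<le> b - 2"
  shows "NN_coeff {a,b} j = Ap (b-1) a (b-2-j) * Ss (b-1) a (b-2-j)"
proof -
  define L where "L = b - 1"
  define r where "r = b - 2 - j"
  have lam: "lamI {a,b} = [L,L,a]" using lamI_eq[OF ab] L_def by simp
  have s: "sI {a,b} - j = r" using sI_eq[OF ab] r_def by simp
  have md: "diagram (muI {a,b}) = M0 L a" using muI_diag[OF ab] L_def by simp
  have aL: "a \<le> L" using ab L_def by simp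
  have rL: "r \<le> L - 1" using r_def L_def by simp
  have Dset: "{D. excited [L,L,a] (muI {a,b}) D \<and> card {c \<in> D. fst c = 1} = r}
      = (\<lambda>q. E L a r q) ` {0..min r (a-1)}"
  proof (rule set_eqI)
    fix D
    show "D \<in> {D. excited [L,L,a] (muI {a,b}) D \<and> card {c \<in> D. fst c = 1} = r} \<longleftrightarrow>
          D \<in> (\<lambda>q. E L a r q) ` {0..min r (a-1)}"
    proof
      assume "D \<in> {D. excited [L,L,a] (muI {a,b}) D \<and> card {c \<in> D. fst c = 1} = r}"
      then have ex: "excited [L,L,a] (muI {a,b}) D" and cr: "card {c \<in> D. fst c = 1} = r" by auto
      obtain r' q where rq: "r' \<le> L - 1" "q \<le> r'" "q \<le> a - 1" and D: "D = E L a r' q"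
        using excited_E_only[OF ex refl md ab(1) aL] by blast
      have "r' = r" using cr D row1_card by simp
      then show "D \<in> (\<lambda>q. E L a r q) ` {0..min r (a-1)}" using rq D by auto
    next
      assume "D \<in> (\<lambda>q. E L a r q) ` {0..min r (a-1)}"
      then obtain q where q: "q \<le> r" "q \<le> a - 1" and D: "D = E L a r q" by auto
      have "excited [L,L,a] (muI {a,b}) D"
        unfolding D by (rule excited_E_all[OF refl md ab(1) aL rL q])
      moreover have "card {c \<in> D. fst c = 1} = r" using D row1_card by simp
      ultimately show "D \<in> {D. excited [L,L,a] (muI {a,b}) D \<and> card {c \<in> D. fst c = 1} = r}" by simp
    qed
  qed
  have inj: "inj_on (\<lambda>q. E L a r q) {0..min r (a-1)}"
    by (rule inj_onI) (use E_inj in auto)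
  have "NN_coeff {a,b} j = (\<Sum>D\<in>(\<lambda>q. E L a r q) ` {0..min r (a-1)}. \<Prod>c\<in>{c \<in> D. fst c \<noteq> 1}. hook [L,L,a] c)"
    unfolding NN_coeff_def lam s Dset ..
  also have "\<dots> = (\<Sum>q\<in>{0..min r (a-1)}. \<Prod>c\<in>{c \<in> E L a r q. fst c \<noteq> 1}. hook [L,L,a] c)"
    by (subst sum.reindex[OF inj]) simp
  also have "\<dots> = (\<Sum>q\<in>{0..min r (a-1)}. Ap L a r * Tq L a q)"
    by (rule sum.cong[OF refl], rule prod_E) (use ab aL rL in auto)
  also have "\<dots> = Ap L a r * Ss L a r" unfolding Ss_def by (simp add: sum_distrib_left)
  finally show ?thesis unfolding L_def r_def .
qed



lemma unimodal_intro:
  assumes "i \<le> m" "\<And>k. k < i \<Longrightarrow> x k \<le> x (Suc k)" "\<And>k. i \<le> k \<Longrightarrow> k < m \<Longrightarrow> x (Suc k) \<le> x k"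
  shows "unimodal x m"
proof -
  have up: "x a \<le> x (a + d)" if "a + d \<le> i" for a d
    using that
  proof (induction d)
    case 0 then show ?case by simp
  next
    case (Suc d)
    then have "x a \<le> x (a + d)" by simp
    also have "x (a + d) \<le> x (Suc (a + d))" using assms(2) Suc.prems by simp
    finally show ?case by simp
  qed
  have down: "x (a + d) \<le> x a" if "i \<le> a" "a + d \<le> m" for a d
    using that
  proof (induction d)
    case 0 then show ?case by simp
  next
    case (Suc d)
    have "x (Suc (a + d)) \<le> x (a + d)" using assms(3) Suc.prems by simp
    also have "x (a + d) \<le> x a" using Suc by simp
    finally show ?case by simp
  qed
  have U: "x a \<le> x b" if "a \<le> b" "b \<le> i" for a b
  proof -
    have "b = a + (b - a)" using that by simp
    then show ?thesis using up[of a "b - a"] that by metis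
  qed
  have D: "x b \<le> x a" if "i \<le> a" "a \<le> b" "b \<le> m" for a b
  proof -
    have "b = a + (b - a)" using that by simp
    then show ?thesis using down[of a "b - a"] that by metis
  qed
  show ?thesis unfolding unimodal_def using assms(1) U D by blast
qed

lemma unimodal_cong1:
  assumes c: "\<And>j. j \<le> m \<Longrightarrow> x j = y j" and u: "unimodal x m"
  shows "unimodal y m"
proof -
  from u obtain i where i: "i \<le> m" and up: "\<forall>a b. a \<le> b \<and> b \<le> i \<longrightarrow> x a \<le> x b"
    and dn: "\<forall>a b. i \<le> a \<and> a \<le> b \<and> b \<le> m \<longrightarrow> x b \<le> x a" unfolding unimodal_def by blast
  have up': "\<forall>a b. a \<le> b \<and> b \<le> i \<longrightarrow> y a \<le> y b"
  proof (intro allI impI)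
    fix a b assume ab: "a \<le> b \<and> b \<le> i"
    then have "x a \<le> x b" using up by blast
    moreover have "a \<le> m" "b \<le> m" using ab i by linarith+
    ultimately show "y a \<le> y b" using c by simp
  qed
  have dn': "\<forall>a b. i \<le> a \<and> a \<le> b \<and> b \<le> m \<longrightarrow> y b \<le> y a"
  proof (intro allI impI)
    fix a b assume ab: "i \<le> a \<and> a \<le> b \<and> b \<le> m"
    then have "x b \<le> x a" using dn by blast
    moreover have "a \<le> m" "b \<le> m" using ab by linarith+
    ultimately show "y b \<le> y a" using c by simp
  qed
  show ?thesis unfolding unimodal_def using i up' dn' by blast
qed

lemma unimodal_cong: "(\<And>j. j \<le> m \<Longrightarrow> x j = y j) \<Longrightarrow> unimodal x m = unimodal y m"
  using unimodal_cong1[of m x y] unimodal_cong1[of m y x] by metis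

lemma h2_pos: "1 \<le> h2 L a j" by (simp add: h2_def)
lemma h3_pos: "1 \<le> h3 a j" by (simp add: h3_def)
lemma Ap_pos: "0 < Ap L a r" unfolding Ap_def using h2_pos by (simp add: Suc_le_eq)
lemma Tq_pos: "0 < Tq L a q" unfolding Tq_def using h2_pos h3_pos by (simp add: Suc_le_eq)

lemma Ap_step: "r + 2 \<le> L \<Longrightarrow> Ap L a r = h2 L a (r+2) * Ap L a (r+1)"
  unfolding Ap_def by (subst prod.atLeast_Suc_atMost) auto

lemma Ss_const: "a - 1 \<le> r \<Longrightarrow> Ss L a (r+1) = Ss L a r"
  unfolding Ss_def by (simp add: min_def)

lemma Ss_low: "r \<le> a - 1 \<Longrightarrow> Ss L a r = (\<Sum>q\<in>{0..r}. Tq L a q)"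
  unfolding Ss_def by (simp add: min_def)

lemma asc:
  assumes "r + 2 \<le> L" "Ss L a (r+1) = Ss L a r"
  shows "Ap L a (r+1) * Ss L a (r+1) \<le> Ap L a r * Ss L a r"
proof -
  have "Ap L a (r+1) \<le> Ap L a r" using Ap_step[OF assms(1), of a] h2_pos[of L a "r+2"] by simp
  then show ?thesis using assms(2) by simp
qed

lemma Tq_ratio:
  assumes "r + 2 \<le> a" "a \<le> L"
  shows "Tq L a (r+1) * (a - r - 1) = Tq L a r * (L - r + 1)"
proof -
  have h2e: "h2 L a (r+1) = L - r + 1" using assms by (simp add: h2_def)
  have h3e: "h3 a (r+2) = a - r - 1" using assms by (simp add: h3_def)
  have p1: "(\<Prod>j\<in>{1..r+1}. h2 L a j) = (\<Prod>j\<in>{1..r}. h2 L a j) * h2 L a (r+1)"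
    by simp
  have p2: "(\<Prod>j\<in>{r+2..a}. h3 a j) = h3 a (r+2) * (\<Prod>j\<in>{r+1+2..a}. h3 a j)"
    using assms by (subst prod.atLeast_Suc_atMost) (auto simp: numeral_3_eq_3)
  define P where "P = (\<Prod>j\<in>{1..r}. h2 L a j)"
  define Q where "Q = (\<Prod>j\<in>{r+1+2..a}. h3 a j)"
  have A: "Tq L a (r+1) = P * (L - r + 1) * Q" unfolding Tq_def p1 h2e P_def Q_def by simp
  have B: "Tq L a r = P * ((a - r - 1) * Q)" unfolding Tq_def p2 h3e P_def Q_def by simp
  show ?thesis unfolding A B by (simp only: mult.assoc mult.commute mult.left_commute)
qed

lemma Ss_inv:
  assumes "1 \<le> a" "a \<le> L" "r \<le> a - 1"
  shows "(L - a + 1) * (\<Sum>q\<in>{0..r}. Tq L a q) < (L - r + 1) * Tq L a r"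
  using assms(3)
proof (induction r)
  case 0
  have "(L - a + 1) * Tq L a 0 < (L + 1) * Tq L a 0"
    using Tq_pos[of L a 0] assms by simp
  then show ?case by simp
next
  case (Suc r)
  have IH: "(L - a + 1) * (\<Sum>q\<in>{0..r}. Tq L a q) < (L - r + 1) * Tq L a r" using Suc by simp
  have rat: "Tq L a (r+1) * (a - r - 1) = Tq L a r * (L - r + 1)" using Suc.prems assms by (intro Tq_ratio) simp_all
  have "(L - a + 1) * (\<Sum>q\<in>{0..Suc r}. Tq L a q) = (L - a + 1) * (\<Sum>q\<in>{0..r}. Tq L a q) + (L - a + 1) * Tq L a (Suc r)"
    by (simp add: algebra_simps)
  also have "\<dots> < (L - r + 1) * Tq L a r + (L - a + 1) * Tq L a (Suc r)" using IH by simp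
  also have "\<dots> = (a - r - 1) * Tq L a (Suc r) + (L - a + 1) * Tq L a (Suc r)" using rat by (simp add: mult.commute)
  also have "\<dots> = ((a - r - 1) + (L - a + 1)) * Tq L a (Suc r)" by (simp add: algebra_simps)
  also have "(a - r - 1) + (L - a + 1) = L - Suc r + 1" using Suc.prems assms by simp
  finally show ?case .
qed



definition yv :: "nat \<Rightarrow> nat \<Rightarrow> nat \<Rightarrow> nat" where
  "yv L a r = Ap L a r * Ss L a r"

lemma asc_y:
  assumes "r + 2 \<le> L" "a - 1 \<le> r"
  shows "yv L a (r+1) \<le> yv L a r"
  unfolding yv_def by (rule asc[OF assms(1) Ss_const[OF assms(2)]])

lemma xy_shift:
  assumes "k < L - 1"
  shows "L - 1 - k = (L - 2 - k) + 1" "L - 1 - Suc k = L - 2 - k" "(L - 2 - k) + 2 \<le> L"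
  using assms by simp_all

lemma uni_small:
  assumes a: "1 \<le> a" "a \<le> 2" "a \<le> L"
  shows "unimodal (\<lambda>j. yv L a (L-1-j)) (L-1)"
proof (cases "a = 1")
  case True
  show ?thesis
  proof (rule unimodal_intro[of "L-1"])
    fix k assume k: "k < L - 1"
    have "yv L a ((L - 2 - k) + 1) \<le> yv L a (L - 2 - k)"
      by (rule asc_y) (use k True in simp_all)
    then show "yv L a (L - 1 - k) \<le> yv L a (L - 1 - Suc k)" using xy_shift[OF k] by simp
  qed simp_all
next
  case False
  then have a2: "a = 2" using a by simp
  then have L2: "2 \<le> L" using a by simp
  show ?thesis
  proof (rule unimodal_intro[of "L-2"])
    fix k assume k: "k < L - 2"
    have "yv L a ((L - 2 - k) + 1) \<le> yv L a (L - 2 - k)"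
      by (rule asc_y) (use k a2 in simp_all)
    moreover have "k < L - 1" using k by simp
    ultimately show "yv L a (L - 1 - k) \<le> yv L a (L - 1 - Suc k)" using xy_shift[of k L] by simp
  next
    fix k assume k: "L - 2 \<le> k" "k < L - 1"
    then have kk: "k = L - 2" by simp
    have e1: "L - 1 - Suc k = 0" using kk L2 by simp
    have e2: "L - 1 - k = 1" using kk L2 by simp
    have Ap0': "Ap L a 0 = h2 L a (0+2) * Ap L a (0+1)" by (rule Ap_step) (use L2 in simp)
    have h: "h2 L a 2 = L" using L2 a2 by (simp add: h2_def)
    have Ap0: "Ap L a 0 = L * Ap L a 1" by (simp only: Ap0' add_0 h)
    have T0: "Tq L a 0 = 1" using a2 by (simp add: Tq_def h3_def)
    have T1: "Tq L a 1 = L + 1" using a2 L2 by (simp add: Tq_def h2_def)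
    have S0: "Ss L a 0 = 1" using T0 by (simp add: Ss_def)
    have S1: "Ss L a 1 = L + 2" using T0 T1 a2 by (simp add: Ss_def)
    have "yv L a 0 \<le> yv L a 1" unfolding yv_def Ap0 S0 S1 by simp
    then show "yv L a (L - 1 - Suc k) \<le> yv L a (L - 1 - k)" unfolding e1 e2 .
  qed (use L2 in simp)
qed

lemma uni_33: "unimodal (\<lambda>j. yv 3 3 (3-1-j)) (3-1)"
proof -
  have i1: "{2..3::nat} = {2,3}" "{0..2::nat} = {0,1,2}" "{0..1::nat} = {0,1}" "{3..3::nat} = {3}"
    "{1..2::nat} = {1,2}" "{1..1::nat} = {1}" "{2..2::nat} = {2}"
    "{Suc (Suc 0)..3::nat} = {2,3}" "{Suc 0..2::nat} = {1,2}" by auto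
  have T: "Tq 3 3 0 = 2" "Tq 3 3 1 = 4" "Tq 3 3 2 = 12"
    by (simp_all add: Tq_def h2_def h3_def i1)
  have T': "Tq 3 3 (Suc 0) = 4" using T by simp
  have y: "yv 3 3 2 = 18" "yv 3 3 1 = 12" "yv 3 3 0 = 12"
    by (simp_all add: yv_def Ap_def Ss_def T T' i1 h2_def)
  show ?thesis
  proof (rule unimodal_intro[of 0])
    fix k :: nat assume "0 \<le> k" "k < 3 - 1"
    then have "k = 0 \<or> k = 1" by auto
    then show "yv 3 3 (3 - 1 - Suc k) \<le> yv 3 3 (3 - 1 - k)" using y by auto
  qed simp_all
qed

lemma nonuni:
  assumes a: "3 \<le> a" "a \<le> L" "\<not> (a = 3 \<and> L = 3)"
  shows "\<not> unimodal (\<lambda>j. yv L a (L-1-j)) (L-1)"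
proof
  assume u: "unimodal (\<lambda>j. yv L a (L-1-j)) (L-1)"
  define X where "X = (\<Prod>j\<in>{3..a}. h3 a j)"
  have Xp: "0 < X" unfolding X_def using h3_pos by (simp add: Suc_le_eq)
  have Ap0': "Ap L a 0 = h2 L a (0+2) * Ap L a (0+1)" by (rule Ap_step) (use a in simp)
  have h: "h2 L a 2 = L" using a by (simp add: h2_def)
  have Ap0: "Ap L a 0 = L * Ap L a 1" by (simp only: Ap0' add_0 h)
  have e: "(\<Prod>j\<in>{2..a}. h3 a j) = h3 a 2 * X" unfolding X_def using a
    by (subst prod.atLeast_Suc_atMost) (auto simp: numeral_3_eq_3)
  have t: "Tq L a 0 = (\<Prod>j\<in>{2..a}. h3 a j)" by (simp add: Tq_def numeral_2_eq_2)
  have h32: "h3 a 2 = a - 1" using a by (simp add: h3_def)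
  have T0: "Tq L a 0 = (a - 1) * X" unfolding t e h32 by simp
  have T1: "Tq L a 1 = (L + 1) * X" using a by (simp add: Tq_def h2_def X_def numeral_3_eq_3)
  have S0: "Ss L a 0 = Tq L a 0" by (simp add: Ss_def)
  have mn: "min 1 (a - 1) = 1" using a by simp
  have S1: "Ss L a 1 = Tq L a 0 + Tq L a 1" unfolding Ss_def mn by simp
  have key1: "a + L < L * (a - 1)"
  proof -
    have "a < L * (a - 2)"
    proof (cases "a = 3")
      case True then show ?thesis using a by simp
    next
      case False
      then have "2 \<le> a - 2" using a by simp
      then have "L * 2 \<le> L * (a - 2)" by simp
      then show ?thesis using a by linarith
    qed
    moreover have "L * (a - 1) = L * (a - 2) + L" using a
      by (metis Suc_diff_Suc add.commute mult_Suc_right numeral_2_eq_2 One_nat_def Suc_le_lessD le_trans numeral_3_eq_3 Suc_leD)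
    ultimately show ?thesis by linarith
  qed
  have y01: "yv L a 1 < yv L a 0"
  proof -
    have "(a - 1) + (L + 1) = a + L" using a by simp
    then have sx: "(a - 1) * X + (L + 1) * X = (a + L) * X" by (metis add_mult_distrib)
    have "yv L a 1 = Ap L a 1 * X * (a + L)" unfolding yv_def S1 T0 T1 sx
      by (simp add: algebra_simps)
    also have "\<dots> < Ap L a 1 * X * (L * (a - 1))"
      using key1 Xp Ap_pos[of L a 1] by simp
    also have "\<dots> = yv L a 0" unfolding yv_def Ap0 S0 T0 by (simp add: algebra_simps)
    finally show ?thesis .
  qed
  have Sa: "(L - a + 1) * Ss L a (a - 2) < Tq L a (a - 1)"
  proof -
    have "(L - a + 1) * (\<Sum>q\<in>{0..a-2}. Tq L a q) < (L - (a - 2) + 1) * Tq L a (a - 2)"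
      by (rule Ss_inv) (use a in simp_all)
    also have "\<dots> = Tq L a (a - 2 + 1) * (a - (a - 2) - 1)"
      using Tq_ratio[of "a-2" a L] a by simp
    also have "\<dots> = Tq L a (a - 1)" using a by (simp add: numeral_2_eq_2 Suc_diff_Suc)
    finally show ?thesis using Ss_low[of "a-2" a L] a by simp
  qed
  have Ssplit: "Ss L a (a - 1) = Ss L a (a - 2) + Tq L a (a - 1)"
  proof -
    have "a - 1 = Suc (a - 2)" using a by simp
    then show ?thesis using Ss_low[of "a-1" a L] Ss_low[of "a-2" a L] a by simp
  qed
  have ApS: "Ap L a (a - 2) = (L - a + 2) * Ap L a (a - 1)"
  proof -
    have "Ap L a (a - 2) = h2 L a (a - 2 + 2) * Ap L a (a - 2 + 1)" by (rule Ap_step) (use a in simp)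
    moreover have "a - 2 + 2 = a" "a - 2 + 1 = a - 1" using a by simp_all
    ultimately show ?thesis using a by (simp add: h2_def)
  qed
  have yg: "yv L a (a - 2) < yv L a (a - 1)"
  proof -
    have "(L - a + 2) * Ss L a (a - 2) < Ss L a (a - 1)"
      using Sa Ssplit by simp
    then have "Ap L a (a - 1) * ((L - a + 2) * Ss L a (a - 2)) < Ap L a (a - 1) * Ss L a (a - 1)"
      using Ap_pos[of L a "a-1"] by simp
    then show ?thesis unfolding yv_def ApS by (simp add: algebra_simps)
  qed
  from u obtain i where i: "i \<le> L - 1"
    and up: "\<forall>p q. p \<le> q \<and> q \<le> i \<longrightarrow> yv L a (L-1-p) \<le> yv L a (L-1-q)"
    and dn: "\<forall>p q. i \<le> p \<and> p \<le> q \<and> q \<le> L - 1 \<longrightarrow> yv L a (L-1-q) \<le> yv L a (L-1-p)"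
    unfolding unimodal_def by blast
  show False
  proof (cases "i \<le> L - 2")
    case True
    have "yv L a (L-1-(L-1)) \<le> yv L a (L-1-(L-2))" by (rule dn[rule_format]) (use True in simp)
    moreover have "L-1-(L-1) = 0" "L-1-(L-2) = 1" using a by simp_all
    ultimately show False using y01 by simp
  next
    case False
    then have ii: "i = L - 1" using i by simp
    have "yv L a (L-1-(L-a)) \<le> yv L a (L-1-(L-a+1))" by (rule up[rule_format]) (use ii a in simp)
    moreover have "L-1-(L-a) = a - 1" "L-1-(L-a+1) = a - 2" using a by simp_all
    ultimately show False using yg by simp
  qed
qed



lemma key:
  fixes a b :: nat
  assumes ab: "1 \<le> a" "a < b"
  shows "unimodal (NN_coeff {a,b}) (sI {a,b}) \<longleftrightarrow> a \<le> 2 \<or> (a = 3 \<and> b = 4)"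
proof -
  define L where "L = b - 1"
  have s: "sI {a,b} = L - 1" using sI_eq[OF ab] L_def by simp
  have aL: "a \<le> L" using ab L_def by simp
  have cong: "unimodal (NN_coeff {a,b}) (L-1) = unimodal (\<lambda>j. yv L a (L-1-j)) (L-1)"
  proof (rule unimodal_cong)
    fix j assume j: "j \<le> L - 1"
    have "NN_coeff {a,b} j = Ap (b-1) a (b-2-j) * Ss (b-1) a (b-2-j)"
      by (rule NN_formula[OF ab]) (use j L_def in simp)
    moreover have "b - 2 - j = L - 1 - j" using L_def by simp
    ultimately show "NN_coeff {a,b} j = yv L a (L-1-j)" unfolding yv_def L_def by simp
  qed
  show ?thesis unfolding s cong
  proof
    assume u: "unimodal (\<lambda>j. yv L a (L-1-j)) (L-1)"
    show "a \<le> 2 \<or> (a = 3 \<and> b = 4)"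
    proof (rule ccontr)
      assume "\<not> (a \<le> 2 \<or> (a = 3 \<and> b = 4))"
      then have "3 \<le> a" "\<not> (a = 3 \<and> L = 3)" using L_def ab by auto
      then show False using nonuni[of a L] aL u by simp
    qed
  next
    assume "a \<le> 2 \<or> (a = 3 \<and> b = 4)"
    then consider "a \<le> 2" | "a = 3" "L = 3" using L_def by auto
    then show "unimodal (\<lambda>j. yv L a (L-1-j)) (L-1)"
    proof cases
      case 1 then show ?thesis using uni_small[OF ab(1) _ aL] by simp
    next
      case 2 then show ?thesis using uni_33 by simp
    qed
  qed
qed

lemma card_U:
  fixes n :: nat
  assumes n: "4 \<le> n"
  shows "card {I. I \<subseteq> {1..n} \<and> card I = 2 \<and> unimodal (NN_coeff I) (sI I)} = 2 * n - 2"
proof -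
  define A1 where "A1 = (\<lambda>b. {1::nat,b}) ` {2..n}"
  define A2 where "A2 = (\<lambda>b. {2::nat,b}) ` {3..n}"
  have eq: "{I. I \<subseteq> {1..n} \<and> card I = 2 \<and> unimodal (NN_coeff I) (sI I)} = (A1 \<union> A2) \<union> {{3,4}}"
  proof (rule set_eqI)
    fix I :: "nat set"
    show "I \<in> {I. I \<subseteq> {1..n} \<and> card I = 2 \<and> unimodal (NN_coeff I) (sI I)} \<longleftrightarrow> I \<in> (A1 \<union> A2) \<union> {{3,4}}"
    proof
      assume "I \<in> {I. I \<subseteq> {1..n} \<and> card I = 2 \<and> unimodal (NN_coeff I) (sI I)}"
      then have sub: "I \<subseteq> {1..n}" and c2: "card I = 2" and u: "unimodal (NN_coeff I) (sI I)" by auto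
      obtain x y where xy: "I = {x,y}" "x \<noteq> y" using c2 card_2_iff by metis
      obtain a b where abI: "I = {a,b}" "a < b"
      proof (cases "x < y")
        case True then show ?thesis using that xy by blast
      next
        case False then have "y < x" using xy by simp
        then show ?thesis using that xy by (metis insert_commute)
      qed
      have ab1: "1 \<le> a" "b \<le> n" using sub abI by auto
      have "a \<le> 2 \<or> (a = 3 \<and> b = 4)" using key[of a b] ab1 abI u by simp
      then consider "a = 1" | "a = 2" | "a = 3" "b = 4" using ab1 by linarith
      then show "I \<in> (A1 \<union> A2) \<union> {{3,4}}"
      proof cases
        case 1 then have "I \<in> A1" unfolding A1_def using abI ab1 by auto
        then show ?thesis by simp
      next
        case 2 then have "I \<in> A2" unfolding A2_def using abI ab1 by auto
        then show ?thesis by simp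
      qed (use abI in simp)
    next
      assume "I \<in> (A1 \<union> A2) \<union> {{3,4}}"
      then obtain a b where abI: "I = {a,b}" "1 \<le> a" "a < b" "b \<le> n" "a \<le> 2 \<or> (a = 3 \<and> b = 4)"
        unfolding A1_def A2_def using n by auto
      have "unimodal (NN_coeff I) (sI I)" using key[of a b] abI by simp
      moreover have "card I = 2" using abI by simp
      moreover have "I \<subseteq> {1..n}" using abI by auto
      ultimately show "I \<in> {I. I \<subseteq> {1..n} \<and> card I = 2 \<and> unimodal (NN_coeff I) (sI I)}" by simp
    qed
  qed
  have cA1: "card A1 = n - 1" unfolding A1_def
    by (subst card_image) (auto simp: inj_on_def doubleton_eq_iff)
  have cA2: "card A2 = n - 2" unfolding A2_def
    by (subst card_image) (auto simp: inj_on_def doubleton_eq_iff)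
  have d12: "A1 \<inter> A2 = {}" unfolding A1_def A2_def by (auto simp: doubleton_eq_iff)
  have d3: "(A1 \<union> A2) \<inter> {{3,4}} = {}" unfolding A1_def A2_def by (auto simp: doubleton_eq_iff)
  have fin: "finite A1" "finite A2" unfolding A1_def A2_def by simp_all
  have "card ((A1 \<union> A2) \<union> {{3,4}}) = card (A1 \<union> A2) + card {{3::nat,4}}"
    by (rule card_Un_disjoint) (use fin d3 in auto)
  also have "card (A1 \<union> A2) = card A1 + card A2" by (rule card_Un_disjoint) (use fin d12 in auto)
  finally show ?thesis unfolding eq cA1 cA2 using n by simp
qed

theorem corollary6p3:
  fixes n :: nat
  assumes "n \<ge> 4"
  shows "real (card {I. I \<subseteq> {1..n} \<and> card I = 2 \<and> unimodal (NN_coeff I) (sI I)})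
           / real (card {I. I \<subseteq> {1..n} \<and> card I = 2}) = 4 / real n"
proof -
  have tot: "card {I. I \<subseteq> {1..n} \<and> card I = 2} = n choose 2"
    using n_subsets[of "{1..n}" 2] by simp
  have ev: "even (n * (n - 1))" by (cases n) auto
  have "2 * (n choose 2) = n * (n - 1)" using ev by (simp add: choose_two)
  then have c2: "2 * real (n choose 2) = real n * (real n - 1)" using assms
    by (metis of_nat_1 of_nat_diff of_nat_mult of_nat_numeral le_trans one_le_numeral)
  have u: "real (2 * n - 2) = 2 * (real n - 1)" using assms by simp
  have np: "real n > 1" using assms by simp
  show ?thesis unfolding card_U[OF assms] tot u
  proof -
    have "real (n choose 2) = real n * (real n - 1) / 2" using c2 by simp
    then show "2 * (real n - 1) / real (n choose 2) = 4 / real n" using np by (simp add: field_simps)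
  qed
qed

end
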